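(* Let $(\mathcal{E},\Sigma,\partial,\mathcal{M})$ be a decoding problem with fault distance $d$, let $\mathcal{E}=C_1\sqcup\dots\sqcup C_n$ be a partition into commit regions processed in the order $1,\dots,n$, and for each $i$ let $B_i\subseteq \mathcal{E}\setminus(P_i\cup C_i)$ be a buffer region, where $P_i$, $F_i$, $\Sigma_{V_i}$ and $\partial_{V_i}$ are as defined in the context. Run the modular decoding procedure described in the context. Assume that for every $i$: 1. (Local decoder soundness) whenever the input syndrome $s=\partial_{V_i}(\kappa_{P_i}+\epsilon)$ satisfies $s=\partial_{V_i}\eta$ for some $\eta\subseteq C_i\cup B_i$ with $|\eta|<d/2$, the local decoder for task $i$ returns some $\mu_i\subseteq C_i\cup B_i$ with $\partial_{V_i}\mu_i=s$ and $|\mu_i|\le|\mu'|$ for every $\mu'\subseteq C_i\cup B_i$ with $\partial_{V_i}\mu'=s$; 2. (Buffering condition) every connected error $\eta\in\mathbb{Z}_2^{\mathcal{E}}$ such that $\eta\subseteq C_i\cup B_i$, $\partial_{V_i}\eta=0$, $\eta\cap C_i\neq\emptyset$ and $\partial\eta\neq 0$ has weight $|\eta|\ge d$. Then for every physical error $\epsilon\in\mathbb{Z}_2^{\mathcal{E}}$ with $|\epsilon|<d/2$: no task aborts, and the global correction $\kappa=\sum_{i=1}^n\kappa_i$ satisfies $\partial\kappa=\partial\epsilon$ and $|\kappa|\le|\epsilon|$. Consequently $\kappa$ is a minimum-weight correction for the syndrome $\partial\epsilon$ (i.e. $|\kappa|\le|\kappa'|$ for all $\kappa'$ with $\partial\kappa'=\partial\epsilon$),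 and $\kappa_{\mathcal{M}}=\epsilon_{\mathcal{M}}$.
   Context: Setting. $\mathcal{E}$ is a finite set of elementary error generators and $\Sigma$ a finite set of check generators. Errors are elements of $\mathbb{Z}_2^{\mathcal{E}}$, identified with subsets of $\mathcal{E}$ via indicator vectors; addition is symmetric difference, and for $\eta\in\mathbb{Z}_2^{\mathcal E}$ and $A\subseteq\mathcal{E}$, $\eta_A:=\eta\cap A$. The weight $|\eta|$ is the cardinality of $\eta$. There is a linear syndrome map $\partial:\mathbb{Z}_2^{\mathcal{E}}\to\mathbb{Z}_2^{\Sigma}$; $\eta$ is undetectable if $\partial\eta=0$. $\mathcal{M}$ is a set of logical outcomes, and each error $\eta$ has a linear logical effect $\eta_{\mathcal{M}}\in\mathbb{Z}_2^{\mathcal{M}}$ (linear in $\eta$). The fault distance $d$ is the minimum weight of an error $\eta$ with $\partial\eta=0$ and $\eta_{\mathcal{M}}\neq0$. Connectedness. Two generators $e_1,e_2\in\mathcal{E}$ are directly connected if there is $\sigma\in\Sigma$ with $\partial e_1(\sigma)=\partial e_2(\sigma)=1$. An error $\eta$ (as a set) is connected if it is connected under this adjacency relation; its connected components are the maximal connected subsets. Modular decoding. Commit regions $C_1,\dots,C_n$ partition $\mathcal{E}$ and are processed in the order $1,\dots,n$. For task $i$: the past is $P_i:=C_1\cup\dots\cup C_{i-1}$; the buffer is $B_i\subseteq\mathcal{E}\setminus(P_i\cup C_i)$; the future is $F_i:=\mathcal{E}\setminus(P_i\cup C_i\cup B_i)$. The visible checks are $\Sigma_{V_i}:=\{\sigma\in\Sigma:\partial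 f(\sigma)=0\ \text{for all } f\in F_i\}$, and $\partial_{V_i}\eta$ denotes the restriction of $\partial\eta$ to $\Sigma_{V_i}$. Let $\kappa_{P_i}:=\kappa_1+\dots+\kappa_{i-1}$ (with $\kappa_{P_1}=0$). Task $i$ is given the syndrome $s_i=\partial_{V_i}(\kappa_{P_i}+\epsilon)$ and a local decoder returns a correction estimate $\mu_i\subseteq C_i\cup B_i$ with $\partial_{V_i}\mu_i=s_i$ (the task aborts if no such $\mu_i$ exists); the committed correction is $\kappa_i:=\mu_i\cap C_i$. The global correction is $\kappa:=\kappa_1+\dots+\kappa_n$. *)

theory Defs
  imports Main "HOL-Library.Extended_Nat"
begin

text \<open>Errors are subsets of the generator set E (indicator vectors over Z_2);
  addition is symmetric difference.\<close>
definition sdiff :: "'a set \<Rightarrow> 'a set \<Rightarrow> 'a set" (infixl "\<oplus>" 65) where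
  "A \<oplus> B = (A - B) \<union> (B - A)"

text \<open>Syndrome map: D e \<sigma> means that the syndrome of the elementary generator e
  has value 1 at check \<sigma>. The syndrome of an error is the Z_2-linear extension,
  represented as the set of checks with value 1.\<close>
definition syn :: "'s set \<Rightarrow> ('e \<Rightarrow> 's \<Rightarrow> bool) \<Rightarrow> 'e set \<Rightarrow> 's set" where
  "syn Sig D \<eta> = {\<sigma> \<in> Sig. odd (card {e \<in> \<eta>. D e \<sigma>})}"

text \<open>Logical effect: L e m means generator e flips logical outcome m; extended linearly.\<close>
definition logical :: "'m set \<Rightarrow> ('e \<Rightarrow> 'm \<Rightarrow> bool) \<Rightarrow> 'e set \<Rightarrow> 'm set" where
  "logical M L \<eta> = {m \<in> M. odd (card {e \<in> \<eta>. L e m})}"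

text \<open>Fault distance (infinity if there is no undetectable logical error).\<close>
definition fault_distance ::
  "'e set \<Rightarrow> 's set \<Rightarrow> ('e \<Rightarrow> 's \<Rightarrow> bool) \<Rightarrow> 'm set \<Rightarrow> ('e \<Rightarrow> 'm \<Rightarrow> bool) \<Rightarrow> enat" where
  "fault_distance E Sig D M L =
     Inf {enat (card \<eta>) | \<eta>. \<eta> \<subseteq> E \<and> syn Sig D \<eta> = {} \<and> logical M L \<eta> \<noteq> {}}"

definition directly_connected :: "'s set \<Rightarrow> ('e \<Rightarrow> 's \<Rightarrow> bool) \<Rightarrow> 'e \<Rightarrow> 'e \<Rightarrow> bool" where
  "directly_connected Sig D e1 e2 = (\<exists>\<sigma>\<in>Sig. D e1 \<sigma> \<and> D e2 \<sigma>)"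

definition connected_error :: "'s set \<Rightarrow> ('e \<Rightarrow> 's \<Rightarrow> bool) \<Rightarrow> 'e set \<Rightarrow> bool" where
  "connected_error Sig D \<eta> =
     (\<forall>x\<in>\<eta>. \<forall>y\<in>\<eta>.
        (x, y) \<in> {(a, b). a \<in> \<eta> \<and> b \<in> \<eta> \<and> directly_connected Sig D a b}\<^sup>*)"

definition past :: "(nat \<Rightarrow> 'e set) \<Rightarrow> nat \<Rightarrow> 'e set" where
  "past C i = (\<Union>j\<in>{1..<i}. C j)"

definition future :: "'e set \<Rightarrow> (nat \<Rightarrow> 'e set) \<Rightarrow> (nat \<Rightarrow> 'e set) \<Rightarrow> nat \<Rightarrow> 'e set" where
  "future E C B i = E - (past C i \<union> C i \<union> B i)"

definition visible ::
  "'e set \<Rightarrow> 's set \<Rightarrow> ('e \<Rightarrow> 's \<Rightarrow> bool) \<Rightarrow> (nat \<Rightarrow> 'e set) \<Rightarrow> (nat \<Rightarrow> 'e set) \<Rightarrow> nat \<Rightarrow> 's set" where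
  "visible E Sig D C B i = {\<sigma> \<in> Sig. \<forall>f \<in> future E C B i. \<not> D f \<sigma>}"

definition synV ::
  "'e set \<Rightarrow> 's set \<Rightarrow> ('e \<Rightarrow> 's \<Rightarrow> bool) \<Rightarrow> (nat \<Rightarrow> 'e set) \<Rightarrow> (nat \<Rightarrow> 'e set) \<Rightarrow> nat \<Rightarrow> 'e set \<Rightarrow> 's set" where
  "synV E Sig D C B i \<eta> = syn Sig D \<eta> \<inter> visible E Sig D C B i"

text \<open>Modular decoding run. dec i s is the local decoder of task i applied to syndrome s;
  None means the task aborts. run ... k is kappa_{P_{k+1}} = kappa_1 + ... + kappa_k,
  or None if some task among 1..k aborted.\<close>
primrec run ::
  "'e set \<Rightarrow> 's set \<Rightarrow> ('e \<Rightarrow> 's \<Rightarrow> bool) \<Rightarrow> (nat \<Rightarrow> 'e set) \<Rightarrow> (nat \<Rightarrow> 'e set) \<Rightarrow>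
   (nat \<Rightarrow> 's set \<Rightarrow> 'e set option) \<Rightarrow> 'e set \<Rightarrow> nat \<Rightarrow> 'e set option" where
  "run E Sig D C B dec \<epsilon> 0 = Some {}"
| "run E Sig D C B dec \<epsilon> (Suc k) =
     (case run E Sig D C B dec \<epsilon> k of
        None \<Rightarrow> None
      | Some K \<Rightarrow>
          (case dec (Suc k) (synV E Sig D C B (Suc k) (K \<oplus> \<epsilon>)) of
             None \<Rightarrow> None
           | Some \<mu> \<Rightarrow> Some (K \<oplus> (\<mu> \<inter> C (Suc k)))))"

end

theory Submission
  imports Defs
begin


lemma sdiff_assoc: "(A \<oplus> B) \<oplus> C = A \<oplus> (B \<oplus> C)" by (auto simp: sdiff_def)
lemma sdiff_commute: "A \<oplus> B = B \<oplus> A" by (auto simp: sdiff_def)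
lemma sdiff_self[simp]: "A \<oplus> A = {}" by (auto simp: sdiff_def)
lemma sdiff_empty[simp]: "A \<oplus> {} = A" "{} \<oplus> A = A" by (auto simp: sdiff_def)
lemma sdiff_empty_iff: "A \<oplus> B = {} \<longleftrightarrow> A = B" by (auto simp: sdiff_def)
lemma sdiff_subset: "A \<subseteq> X \<Longrightarrow> B \<subseteq> X \<Longrightarrow> A \<oplus> B \<subseteq> X" by (auto simp: sdiff_def)
lemma sdiff_Int: "(A \<oplus> B) \<inter> V = (A \<inter> V) \<oplus> (B \<inter> V)" by (auto simp: sdiff_def)

lemma card_sdiff_eq:
  assumes "finite A" "finite B"
  shows "card (A \<oplus> B) + 2 * card (A \<inter> B) = card A + card B"
proof -
  have e: "A \<oplus> B = (A - B) \<union> (B - A)" by (simp add: sdiff_def)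
  have "card (A \<oplus> B) = card (A - B) + card (B - A)"
    unfolding e by (rule card_Un_disjoint) (use assms in auto)
  moreover have "card A = card (A - B) + card (A \<inter> B)"
    using card_Int_Diff[OF assms(1), of B] by simp
  moreover have "card B = card (B - A) + card (A \<inter> B)"
    using card_Int_Diff[OF assms(2), of A] by (simp add: Int_commute)
  ultimately show ?thesis by simp
qed

lemma card_sdiff_le: "finite A \<Longrightarrow> finite B \<Longrightarrow> card (A \<oplus> B) \<le> card A + card B"
  using card_sdiff_eq[of A B] by linarith

lemma filter_sdiff: "{e \<in> A \<oplus> B. P e} = {e \<in> A. P e} \<oplus> {e \<in> B. P e}"
  by (auto simp: sdiff_def)

lemma odd_card_sdiff:
  assumes "finite A" "finite B"
  shows "odd (card (A \<oplus> B)) \<longleftrightarrow> (odd (card A) \<noteq> odd (card B))"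
proof -
  have "card (A \<oplus> B) + 2 * card (A \<inter> B) = card A + card B" by (rule card_sdiff_eq[OF assms])
  then show ?thesis by presburger
qed

lemma mem_sdiff: "x \<in> A \<oplus> B \<longleftrightarrow> (x \<in> A) \<noteq> (x \<in> B)" by (auto simp: sdiff_def)

lemma syn_sdiff:
  assumes "finite A" "finite B"
  shows "syn Sig D (A \<oplus> B) = syn Sig D A \<oplus> syn Sig D B"
proof -
  have "\<sigma> \<in> syn Sig D (A \<oplus> B) \<longleftrightarrow> \<sigma> \<in> syn Sig D A \<oplus> syn Sig D B" for \<sigma>
  proof -
    have "\<sigma> \<in> syn Sig D (A \<oplus> B) \<longleftrightarrow> \<sigma> \<in> Sig \<and> odd (card ({e \<in> A. D e \<sigma>} \<oplus> {e \<in> B. D e \<sigma>}))"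
      unfolding syn_def filter_sdiff by simp
    also have "\<dots> \<longleftrightarrow> \<sigma> \<in> Sig \<and> (odd (card {e \<in> A. D e \<sigma>}) \<noteq> odd (card {e \<in> B. D e \<sigma>}))"
      using assms by (simp add: odd_card_sdiff)
    finally show ?thesis unfolding mem_sdiff by (auto simp: syn_def)
  qed
  then show ?thesis by blast
qed

lemma logical_sdiff:
  assumes "finite A" "finite B"
  shows "logical M L (A \<oplus> B) = logical M L A \<oplus> logical M L B"
proof -
  have "\<sigma> \<in> logical M L (A \<oplus> B) \<longleftrightarrow> \<sigma> \<in> logical M L A \<oplus> logical M L B" for \<sigma>
  proof -
    have "\<sigma> \<in> logical M L (A \<oplus> B) \<longleftrightarrow> \<sigma> \<in> M \<and> odd (card ({e \<in> A. L e \<sigma>} \<oplus> {e \<in> B. L e \<sigma>}))"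
      unfolding logical_def filter_sdiff by simp
    also have "\<dots> \<longleftrightarrow> \<sigma> \<in> M \<and> (odd (card {e \<in> A. L e \<sigma>}) \<noteq> odd (card {e \<in> B. L e \<sigma>}))"
      using assms by (simp add: odd_card_sdiff)
    finally show ?thesis unfolding mem_sdiff by (auto simp: logical_def)
  qed
  then show ?thesis by blast
qed

lemma syn_sdiff_gen:
  assumes "finite A" "finite B" "syn Sig D A = syn Sig D B"
  shows "syn Sig D (K \<oplus> A) = syn Sig D (K \<oplus> B)"
proof -
  have "\<sigma> \<in> syn Sig D (K \<oplus> A) \<longleftrightarrow> \<sigma> \<in> syn Sig D (K \<oplus> B)" for \<sigma>
  proof (cases "finite {e \<in> K. D e \<sigma>}")
    case True
    have "odd (card {e \<in> K \<oplus> A. D e \<sigma>}) \<longleftrightarrow> (odd (card {e \<in> K. D e \<sigma>}) \<noteq> odd (card {e \<in> A. D e \<sigma>}))"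
      unfolding filter_sdiff using True assms by (simp add: odd_card_sdiff)
    moreover have "odd (card {e \<in> K \<oplus> B. D e \<sigma>}) \<longleftrightarrow> (odd (card {e \<in> K. D e \<sigma>}) \<noteq> odd (card {e \<in> B. D e \<sigma>}))"
      unfolding filter_sdiff using True assms by (simp add: odd_card_sdiff)
    moreover have "\<sigma> \<in> Sig \<Longrightarrow> odd (card {e \<in> A. D e \<sigma>}) = odd (card {e \<in> B. D e \<sigma>})"
      using assms(3) unfolding syn_def by blast
    ultimately show ?thesis unfolding syn_def by auto
  next
    case False
    have "infinite {e \<in> K \<oplus> A. D e \<sigma>}"
    proof
      assume f: "finite {e \<in> K \<oplus> A. D e \<sigma>}"
      have "{e \<in> K. D e \<sigma>} \<subseteq> {e \<in> K \<oplus> A. D e \<sigma>} \<union> A" by (auto simp: sdiff_def)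
      then show False using f False assms finite_subset by blast
    qed
    moreover have "infinite {e \<in> K \<oplus> B. D e \<sigma>}"
    proof
      assume f: "finite {e \<in> K \<oplus> B. D e \<sigma>}"
      have "{e \<in> K. D e \<sigma>} \<subseteq> {e \<in> K \<oplus> B. D e \<sigma>} \<union> B" by (auto simp: sdiff_def)
      then show False using f False assms finite_subset by blast
    qed
    ultimately show ?thesis unfolding syn_def by simp
  qed
  then show ?thesis by blast
qed

lemma card_swap:
  assumes "finite \<eta>" "finite \<mu>" "X \<subseteq> \<eta> \<oplus> \<mu>"
  shows "card (\<eta> \<oplus> X) + card (\<mu> \<oplus> X) = card \<eta> + card \<mu>"
proof -
  have fX: "finite X" using assms by (metis finite_Un finite_subset sdiff_def Diff_subset Un_mono)
  have "card (\<eta> \<inter> X) + card (\<mu> \<inter> X) = card X"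
  proof -
    have "X = (\<eta> \<inter> X) \<union> (\<mu> \<inter> X)" using assms(3) by (auto simp: sdiff_def)
    moreover have "(\<eta> \<inter> X) \<inter> (\<mu> \<inter> X) = {}" using assms(3) by (auto simp: sdiff_def)
    ultimately show ?thesis using fX
      by (metis card_Un_disjoint finite_Int)
  qed
  then show ?thesis using card_sdiff_eq[OF assms(1) fX] card_sdiff_eq[OF assms(2) fX] by linarith
qed

lemma comp_part:
  fixes \<delta> Cs :: "'e set" and V :: "'s set"
  assumes fin: "finite \<delta>" and VS: "V \<subseteq> Sig"
    and hyp: "\<And>Q. Q \<subseteq> \<delta> \<Longrightarrow> connected_error Sig D Q \<Longrightarrow> Q \<inter> Cs \<noteq> {}
               \<Longrightarrow> syn Sig D Q \<inter> V = {} \<Longrightarrow> syn Sig D Q = {}"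
    and sd: "syn Sig D \<delta> \<inter> V = {}"
  shows "\<exists>\<delta>C \<subseteq> \<delta>. \<delta>C \<inter> Cs = \<delta> \<inter> Cs \<and> syn Sig D \<delta>C = {}"
proof -
  define R where "R = {(a,b). a \<in> \<delta> \<and> b \<in> \<delta> \<and> directly_connected Sig D a b}"
  define comp where "comp c = {x. (c,x) \<in> R\<^sup>*}" for c
  have comp_sub: "comp c \<subseteq> \<delta>" if "c \<in> \<delta>" for c
  proof
    fix x assume "x \<in> comp c"
    then have "(c,x) \<in> R\<^sup>*" by (simp add: comp_def)
    then show "x \<in> \<delta>"
      by (rule rtranclE) (use that in \<open>auto simp: R_def\<close>)
  qed
  have self: "c \<in> comp c" for c by (simp add: comp_def)
  have closed: "y \<in> comp c" if "c \<in> \<delta>" "x \<in> comp c" "y \<in> \<delta>" "\<sigma> \<in> Sig" "D x \<sigma>" "D y \<sigma>" for c x y \<sigma>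
  proof -
    have "x \<in> \<delta>" using comp_sub that by blast
    then have "(x,y) \<in> R" using that by (auto simp: R_def directly_connected_def)
    then show ?thesis using that(2) by (auto simp: comp_def intro: rtrancl_into_rtrancl)
  qed
  have filt: "{e \<in> comp c. D e \<sigma>} = {e \<in> \<delta>. D e \<sigma>}"
    if "c \<in> \<delta>" "\<sigma> \<in> Sig" "t \<in> comp c" "D t \<sigma>" for c \<sigma> t
    using comp_sub[OF that(1)] closed[OF that(1) that(3) _ that(2) that(4)] by blast
  have conn: "connected_error Sig D (comp c)" if "c \<in> \<delta>" for c
  proof -
    define Rc where "Rc = {(a,b). a \<in> comp c \<and> b \<in> comp c \<and> directly_connected Sig D a b}"
    have a: "(c,x) \<in> Rc\<^sup>*" if "(c,x) \<in> R\<^sup>*" for x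
      using that
    proof (induction rule: rtrancl_induct)
      case base then show ?case by simp
    next
      case (step y z)
      then have "y \<in> comp c" "z \<in> comp c" by (auto simp: comp_def intro: rtrancl_into_rtrancl)
      then have "(y,z) \<in> Rc" using step by (auto simp: Rc_def R_def)
      then show ?case using step by (auto intro: rtrancl_into_rtrancl)
    qed
    have "sym Rc" unfolding sym_def Rc_def directly_connected_def by blast
    then have symR: "sym (Rc\<^sup>*)" by (rule sym_rtrancl)
    show ?thesis unfolding connected_error_def
    proof (intro ballI)
      fix x y assume "x \<in> comp c" "y \<in> comp c"
      then have "(c,x) \<in> Rc\<^sup>*" "(c,y) \<in> Rc\<^sup>*" using a by (auto simp: comp_def)
      then have "(x,c) \<in> Rc\<^sup>*" using symR by (meson symD)
      then have "(x,y) \<in> Rc\<^sup>*" using \<open>(c,y) \<in> Rc\<^sup>*\<close> by (rule rtrancl_trans)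
      then show "(x,y) \<in> {(a,b). a \<in> comp c \<and> b \<in> comp c \<and> directly_connected Sig D a b}\<^sup>*"
        by (simp add: Rc_def)
    qed
  qed
  have synV_comp: "syn Sig D (comp c) \<inter> V = {}" if "c \<in> \<delta>" for c
  proof (rule ccontr)
    assume "syn Sig D (comp c) \<inter> V \<noteq> {}"
    then obtain \<sigma> where s: "\<sigma> \<in> V" "\<sigma> \<in> Sig" "odd (card {e \<in> comp c. D e \<sigma>})"
      by (auto simp: syn_def)
    then obtain t where "t \<in> comp c" "D t \<sigma>"
      by (metis (no_types, lifting) Collect_empty_eq card.empty even_zero)
    then have "{e \<in> comp c. D e \<sigma>} = {e \<in> \<delta>. D e \<sigma>}" using filt that s by blast
    then have "\<sigma> \<in> syn Sig D \<delta> \<inter> V" using s by (auto simp: syn_def)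
    then show False using sd by blast
  qed
  have syn_comp: "syn Sig D (comp c) = {}" if "c \<in> \<delta>" "c \<in> Cs" for c
    using hyp[OF comp_sub[OF that(1)] conn[OF that(1)] _ synV_comp[OF that(1)]] self that by blast
  define \<delta>C where "\<delta>C = (\<Union>c\<in>\<delta> \<inter> Cs. comp c)"
  have sub: "\<delta>C \<subseteq> \<delta>" unfolding \<delta>C_def using comp_sub by blast
  have cap: "\<delta>C \<inter> Cs = \<delta> \<inter> Cs" unfolding \<delta>C_def using comp_sub self by blast
  have "syn Sig D \<delta>C = {}"
  proof (rule ccontr)
    assume "syn Sig D \<delta>C \<noteq> {}"
    then obtain \<sigma> where s: "\<sigma> \<in> Sig" "odd (card {e \<in> \<delta>C. D e \<sigma>})"
      by (auto simp: syn_def)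
    then obtain t where t: "t \<in> \<delta>C" "D t \<sigma>"
      by (metis (no_types, lifting) Collect_empty_eq card.empty even_zero)
    then obtain c where c: "c \<in> \<delta>" "c \<in> Cs" "t \<in> comp c" unfolding \<delta>C_def by blast
    have e1: "{e \<in> comp c. D e \<sigma>} = {e \<in> \<delta>. D e \<sigma>}" using filt c t s by blast
    have "comp c \<subseteq> \<delta>C" unfolding \<delta>C_def using c by blast
    then have "{e \<in> \<delta>C. D e \<sigma>} = {e \<in> \<delta>. D e \<sigma>}" using e1 sub by blast
    then have "\<sigma> \<in> syn Sig D (comp c)" using e1 s by (simp add: syn_def)
    then show False using syn_comp c by blast
  qed
  then show ?thesis using sub cap by blast
qed


lemma run_syn:
  assumes "finite \<epsilon>1" "finite \<epsilon>2" "syn Sig D \<epsilon>1 = syn Sig D \<epsilon>2"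
  shows "run E Sig D C B dec \<epsilon>1 k = run E Sig D C B dec \<epsilon>2 k"
  by (induction k) (auto simp: synV_def syn_sdiff_gen[OF assms] split: option.split)

theorem mainTheorem1:
  fixes E :: "'e set" and Sig :: "'s set" and M :: "'m set"
    and D :: "'e \<Rightarrow> 's \<Rightarrow> bool" and L :: "'e \<Rightarrow> 'm \<Rightarrow> bool"
    and n :: nat and C B :: "nat \<Rightarrow> 'e set"
    and dec :: "nat \<Rightarrow> 's set \<Rightarrow> 'e set option"
    and d :: enat
  assumes finE: "finite E" and finSig: "finite Sig" and finM: "finite M"
    and d_def: "d = fault_distance E Sig D M L"
    and C_cover: "(\<Union>i\<in>{1..n}. C i) = E"
    and C_nonempty: "\<forall>i\<in>{1..n}. C i \<noteq> {}"
    and C_disj: "\<forall>i\<in>{1..n}. \<forall>j\<in>{1..n}. i \<noteq> j \<longrightarrow> C i \<inter> C j = {}"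
    and B_sub: "\<forall>i\<in>{1..n}. B i \<subseteq> E - (past C i \<union> C i)"
    and dec_valid: "\<forall>i\<in>{1..n}. \<forall>s.
         (\<forall>\<mu>. dec i s = Some \<mu> \<longrightarrow> \<mu> \<subseteq> C i \<union> B i \<and> synV E Sig D C B i \<mu> = s)
       \<and> (dec i s = None \<longrightarrow> \<not> (\<exists>\<mu>. \<mu> \<subseteq> C i \<union> B i \<and> synV E Sig D C B i \<mu> = s))"
    and dec_sound: "\<forall>i\<in>{1..n}. \<forall>s.
         (\<exists>\<eta>. \<eta> \<subseteq> C i \<union> B i \<and> synV E Sig D C B i \<eta> = s \<and> enat (2 * card \<eta>) < d) \<longrightarrow>
         (\<exists>\<mu>. dec i s = Some \<mu> \<and> \<mu> \<subseteq> C i \<union> B i \<and> synV E Sig D C B i \<mu> = s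
              \<and> (\<forall>\<mu>'. \<mu>' \<subseteq> C i \<union> B i \<and> synV E Sig D C B i \<mu>' = s \<longrightarrow> card \<mu> \<le> card \<mu>'))"
    and buffering: "\<forall>i\<in>{1..n}. \<forall>\<eta>.
         connected_error Sig D \<eta> \<and> \<eta> \<subseteq> C i \<union> B i \<and> synV E Sig D C B i \<eta> = {}
         \<and> \<eta> \<inter> C i \<noteq> {} \<and> syn Sig D \<eta> \<noteq> {} \<longrightarrow> d \<le> enat (card \<eta>)"
  shows "\<forall>\<epsilon>. \<epsilon> \<subseteq> E \<and> enat (2 * card \<epsilon>) < d \<longrightarrow>
           (\<exists>\<kappa>. run E Sig D C B dec \<epsilon> n = Some \<kappa>
              \<and> syn Sig D \<kappa> = syn Sig D \<epsilon>
              \<and> card \<kappa> \<le> card \<epsilon>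
              \<and> (\<forall>\<kappa>'. \<kappa>' \<subseteq> E \<and> syn Sig D \<kappa>' = syn Sig D \<epsilon> \<longrightarrow> card \<kappa> \<le> card \<kappa>')
              \<and> logical M L \<kappa> = logical M L \<epsilon>)"
proof -
  have CE: "C j \<subseteq> E" if "j \<in> {1..n}" for j using C_cover that by blast
  have pastE: "past C (Suc k) \<subseteq> E" if "k \<le> n" for k
  proof
    fix x assume "x \<in> past C (Suc k)"
    then obtain j where "j \<in> {1..<Suc k}" "x \<in> C j" by (auto simp: past_def)
    then have "j \<in> {1..n}" "x \<in> C j" using that by auto
    then show "x \<in> E" using CE by blast
  qed
  have pastSuc: "past C (Suc (Suc k)) = past C (Suc k) \<union> C (Suc k)" for k
  proof -
    have "{1..<Suc (Suc k)} = insert (Suc k) {1..<Suc k}" by auto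
    then show ?thesis unfolding past_def by auto
  qed
  have past1: "past C (Suc 0) = {}" by (simp add: past_def)
  have pastn: "past C (Suc n) = E" using C_cover by (simp add: past_def atLeastLessThanSuc_atLeastAtMost)
  have finsub: "finite X" if "X \<subseteq> E" for X using finE that by (rule finite_subset[rotated])
  have syn_empty: "syn Sig D {} = {}" by (simp add: syn_def)
  have core: "\<exists>\<kappa>. run E Sig D C B dec \<epsilon> n = Some \<kappa> \<and> \<kappa> \<subseteq> E \<and> syn Sig D \<kappa> = syn Sig D \<epsilon> \<and> card \<kappa> \<le> card \<epsilon>"
    if epsE: "\<epsilon> \<subseteq> E" and epsd: "enat (2 * card \<epsilon>) < d" for \<epsilon>
  proof -
    have finEps: "finite \<epsilon>" using epsE by (rule finsub)
    have inv: "\<exists>K \<epsilon>'. run E Sig D C B dec \<epsilon> k = Some K \<and> K \<subseteq> past C (Suc k)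
       \<and> \<epsilon>' \<subseteq> E - past C (Suc k) \<and> syn Sig D (K \<oplus> \<epsilon>) = syn Sig D \<epsilon>' \<and> card K + card \<epsilon>' \<le> card \<epsilon>"
      if "k \<le> n" for k
      using that
    proof (induction k)
      case 0
      show ?case by (intro exI[of _ "{}"] exI[of _ \<epsilon>]) (auto simp: past1 epsE)
    next
      case (Suc k)
      then obtain K \<epsilon>' where run: "run E Sig D C B dec \<epsilon> k = Some K"
        and K_sub: "K \<subseteq> past C (Suc k)" and e'_sub: "\<epsilon>' \<subseteq> E - past C (Suc k)"
        and syn_eq: "syn Sig D (K \<oplus> \<epsilon>) = syn Sig D \<epsilon>'" and card_le: "card K + card \<epsilon>' \<le> card \<epsilon>"
        by auto
      define i where "i = Suc k"
      have i: "i \<in> {1..n}" using Suc.prems by (simp add: i_def)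
      define V where "V = visible E Sig D C B i"
      have VS: "V \<subseteq> Sig" by (auto simp: V_def visible_def)
      have synV_eq: "synV E Sig D C B i X = syn Sig D X \<inter> V" for X by (simp add: synV_def V_def)
      have BE: "B i \<subseteq> E - (past C i \<union> C i)" using B_sub i by blast
      have CiE: "C i \<subseteq> E" using CE i by blast
      have finK: "finite K" proof -
        have "k \<le> n" using Suc.prems by simp
        then have "K \<subseteq> E" using K_sub pastE[of k] by blast
        then show ?thesis by (rule finsub)
      qed
      have fine': "finite \<epsilon>'" using e'_sub by (intro finsub) blast
      define \<eta> where "\<eta> = \<epsilon>' \<inter> (C i \<union> B i)"
      define \<phi> where "\<phi> = \<epsilon>' - (C i \<union> B i)"
      have fin\<eta>: "finite \<eta>" using fine' by (simp add: \<eta>_def)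
      have fin\<phi>: "finite \<phi>" using fine' by (simp add: \<phi>_def)
      have split: "\<epsilon>' = \<eta> \<oplus> \<phi>" by (auto simp: \<eta>_def \<phi>_def sdiff_def)
      have \<phi>F: "\<phi> \<subseteq> future E C B i" using e'_sub by (auto simp: \<phi>_def future_def i_def)
      have syn\<phi>: "syn Sig D \<phi> \<inter> V = {}"
      proof -
        have eq: "{e \<in> \<phi>. D e \<sigma>} = {}" if "\<sigma> \<in> V" for \<sigma>
          using that \<phi>F by (auto simp: V_def visible_def)
        show ?thesis
        proof (rule equals0I)
          fix \<sigma> assume h: "\<sigma> \<in> syn Sig D \<phi> \<inter> V"
          then have "odd (card {e \<in> \<phi>. D e \<sigma>})" by (simp add: syn_def)
          moreover have "{e \<in> \<phi>. D e \<sigma>} = {}" using h eq by blast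
          ultimately show False by (metis card.empty even_zero)
        qed
      qed
      have s_eq: "synV E Sig D C B i (K \<oplus> \<epsilon>) = synV E Sig D C B i \<eta>"
      proof -
        have "syn Sig D (K \<oplus> \<epsilon>) = syn Sig D \<eta> \<oplus> syn Sig D \<phi>"
          using syn_eq split syn_sdiff[OF fin\<eta> fin\<phi>] by simp
        then show ?thesis unfolding synV_eq using syn\<phi> by (simp add: sdiff_Int)
      qed
      have card_eta: "card \<eta> \<le> card \<epsilon>'" using fine' by (simp add: \<eta>_def card_mono)
      have eta_d: "enat (2 * card \<eta>) < d"
      proof -
        have "enat (2 * card \<eta>) \<le> enat (2 * card \<epsilon>)" using card_eta card_le by simp
        then show ?thesis using epsd by (rule order.strict_trans1)
      qed
      have \<eta>sub: "\<eta> \<subseteq> C i \<union> B i" by (simp add: \<eta>_def)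
      have ex\<eta>: "\<exists>\<eta>. \<eta> \<subseteq> C i \<union> B i \<and> synV E Sig D C B i \<eta> = synV E Sig D C B i (K \<oplus> \<epsilon>) \<and> enat (2 * card \<eta>) < d"
        using \<eta>sub s_eq eta_d by auto
      from dec_sound[rule_format, OF i, OF ex\<eta>] obtain \<mu> where
        dec: "dec i (synV E Sig D C B i (K \<oplus> \<epsilon>)) = Some \<mu>"
        and \<mu>sub: "\<mu> \<subseteq> C i \<union> B i" and \<mu>syn: "synV E Sig D C B i \<mu> = synV E Sig D C B i (K \<oplus> \<epsilon>)"
        and \<mu>min': "\<forall>\<mu>'. \<mu>' \<subseteq> C i \<union> B i \<and> synV E Sig D C B i \<mu>' = synV E Sig D C B i (K \<oplus> \<epsilon>) \<longrightarrow> card \<mu> \<le> card \<mu>'"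
        by blast
      have \<mu>min: "card \<mu> \<le> card \<mu>'" if "\<mu>' \<subseteq> C i \<union> B i" "synV E Sig D C B i \<mu>' = synV E Sig D C B i (K \<oplus> \<epsilon>)" for \<mu>'
        using \<mu>min' that by blast
      have run': "run E Sig D C B dec \<epsilon> (Suc k) = Some (K \<oplus> (\<mu> \<inter> C i))"
        using run dec unfolding i_def by simp
      have "\<mu> \<subseteq> E" using \<mu>sub CiE BE by blast
      then have fin\<mu>: "finite \<mu>" by (rule finsub)
      define \<delta> where "\<delta> = \<eta> \<oplus> \<mu>"
      have fin\<delta>: "finite \<delta>" using fin\<eta> fin\<mu> by (simp add: \<delta>_def sdiff_def)
      have \<delta>sub: "\<delta> \<subseteq> C i \<union> B i" using \<eta>sub \<mu>sub by (simp add: \<delta>_def sdiff_subset)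
      have \<delta>V: "syn Sig D \<delta> \<inter> V = {}"
      proof -
        have "syn Sig D \<delta> \<inter> V = (syn Sig D \<eta> \<inter> V) \<oplus> (syn Sig D \<mu> \<inter> V)"
          unfolding \<delta>_def syn_sdiff[OF fin\<eta> fin\<mu>] by (rule sdiff_Int)
        also have "syn Sig D \<mu> \<inter> V = syn Sig D \<eta> \<inter> V" using \<mu>syn s_eq by (simp add: synV_eq)
        finally show ?thesis by simp
      qed
      have \<mu>le: "card \<mu> \<le> card \<eta>" using \<mu>min[OF \<eta>sub] s_eq by simp
      have \<delta>d: "enat (card \<delta>) < d"
      proof -
        have "card \<delta> \<le> 2 * card \<eta>" using card_sdiff_le[OF fin\<eta> fin\<mu>] \<mu>le by (simp add: \<delta>_def)
        then have "enat (card \<delta>) \<le> enat (2 * card \<eta>)" by simp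
        then show ?thesis using eta_d by (rule order.strict_trans1)
      qed
      have hyp: "syn Sig D Q = {}" if Q: "Q \<subseteq> \<delta>" "connected_error Sig D Q" "Q \<inter> C i \<noteq> {}"
        "syn Sig D Q \<inter> V = {}" for Q
      proof (rule ccontr)
        assume ne: "syn Sig D Q \<noteq> {}"
        have Qsub: "Q \<subseteq> C i \<union> B i" using Q(1) \<delta>sub by (rule order_trans)
        have sv: "synV E Sig D C B i Q = {}" using Q(4) by (simp only: synV_eq)
        have bufQ: "connected_error Sig D Q \<and> Q \<subseteq> C i \<union> B i \<and> synV E Sig D C B i Q = {}
            \<and> Q \<inter> C i \<noteq> {} \<and> syn Sig D Q \<noteq> {}"
          using Q(2) Qsub sv Q(3) ne by (intro conjI)
        have dQ: "d \<le> enat (card Q)" by (rule buffering[rule_format, OF i bufQ])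
        have cQ: "card Q \<le> card \<delta>" by (rule card_mono[OF fin\<delta> Q(1)])
        have "enat (card Q) \<le> enat (card \<delta>)" using cQ by (simp only: enat_ord_simps)
        with dQ have "d \<le> enat (card \<delta>)" by (rule order_trans)
        from leD[OF this] \<delta>d show False by (rule notE)
      qed
      have cp: "\<exists>\<delta>C \<subseteq> \<delta>. \<delta>C \<inter> C i = \<delta> \<inter> C i \<and> syn Sig D \<delta>C = {}"
        by (rule comp_part[where Sig=Sig and D=D and Cs="C i" and V=V, OF fin\<delta> VS hyp \<delta>V])
      then obtain \<delta>C where \<delta>Csub: "\<delta>C \<subseteq> \<delta>" and \<delta>Ccap: "\<delta>C \<inter> C i = \<delta> \<inter> C i"
        and \<delta>Csyn: "syn Sig D \<delta>C = {}" by blast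
      have fin\<delta>C: "finite \<delta>C" using fin\<delta> \<delta>Csub by (rule finite_subset[rotated])
      have "card \<mu> \<le> card (\<mu> \<oplus> \<delta>C)"
      proof (rule \<mu>min)
        show "\<mu> \<oplus> \<delta>C \<subseteq> C i \<union> B i" using \<mu>sub \<delta>Csub \<delta>sub by (simp add: sdiff_subset)
        show "synV E Sig D C B i (\<mu> \<oplus> \<delta>C) = synV E Sig D C B i (K \<oplus> \<epsilon>)"
          using \<mu>syn by (simp add: synV_eq syn_sdiff[OF fin\<mu> fin\<delta>C] \<delta>Csyn)
      qed
      moreover have "card (\<eta> \<oplus> \<delta>C) + card (\<mu> \<oplus> \<delta>C) = card \<eta> + card \<mu>"
        using card_swap[OF fin\<eta> fin\<mu>] \<delta>Csub by (simp add: \<delta>_def)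
      ultimately have card_swap_le: "card (\<eta> \<oplus> \<delta>C) \<le> card \<eta>" by linarith
      define \<kappa>i where "\<kappa>i = \<mu> \<inter> C i"
      define X where "X = \<eta> \<oplus> \<delta>C \<oplus> \<kappa>i"
      define \<epsilon>'' where "\<epsilon>'' = \<epsilon>' \<oplus> \<delta>C \<oplus> \<kappa>i"
      have fin\<kappa>i: "finite \<kappa>i" using fin\<mu> by (simp add: \<kappa>i_def)
      have XC: "X \<inter> C i = {}"
        using \<delta>Ccap unfolding X_def \<kappa>i_def \<delta>_def by (auto simp: sdiff_def)
      have Xsub: "X \<subseteq> C i \<union> B i"
        using \<eta>sub \<delta>Csub \<delta>sub unfolding X_def \<kappa>i_def by (auto simp: sdiff_def)
      have e''_eq: "\<epsilon>'' = \<phi> \<union> X"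
        using \<delta>Csub \<delta>sub unfolding \<epsilon>''_def X_def \<phi>_def \<eta>_def \<kappa>i_def by (auto simp: sdiff_def)
      have e'_eq: "\<epsilon>' = \<phi> \<union> \<eta>" by (auto simp: \<phi>_def \<eta>_def)
      have \<phi>disj: "\<phi> \<inter> X = {}" "\<phi> \<inter> \<eta> = {}" using Xsub by (auto simp: \<phi>_def \<eta>_def)
      have "X \<subseteq> E" using Xsub CiE BE by blast
      then have finX: "finite X" by (rule finsub)
      have XK: "\<eta> \<oplus> \<delta>C = X \<union> \<kappa>i" "X \<inter> \<kappa>i = {}"
        using XC unfolding X_def \<kappa>i_def by (auto simp: sdiff_def)
      have c1: "card \<kappa>i + card X \<le> card \<eta>"
        using card_swap_le XK card_Un_disjoint[OF finX fin\<kappa>i] by simp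
      have c2: "card \<epsilon>'' = card \<phi> + card X" unfolding e''_eq
        using card_Un_disjoint[OF fin\<phi> finX] \<phi>disj by simp
      have c3: "card \<epsilon>' = card \<phi> + card \<eta>"
        using card_Un_disjoint[OF fin\<phi> fin\<eta>] \<phi>disj e'_eq by simp
      have c4: "card (K \<oplus> \<kappa>i) \<le> card K + card \<kappa>i" by (rule card_sdiff_le[OF finK fin\<kappa>i])
      have e''sub: "\<epsilon>'' \<subseteq> E - past C (Suc (Suc k))"
      proof -
        have "\<phi> \<subseteq> E - past C (Suc (Suc k))" using e'_sub unfolding pastSuc \<phi>_def i_def by blast
        moreover have "X \<subseteq> E - past C (Suc (Suc k))"
          using Xsub XC BE unfolding pastSuc i_def by blast
        ultimately show ?thesis unfolding e''_eq by blast
      qed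
      have Ksub': "K \<oplus> \<kappa>i \<subseteq> past C (Suc (Suc k))"
        unfolding pastSuc using K_sub by (auto simp: sdiff_def \<kappa>i_def i_def)
      have syn'': "syn Sig D ((K \<oplus> \<kappa>i) \<oplus> \<epsilon>) = syn Sig D \<epsilon>''"
      proof -
        have eq1: "(K \<oplus> \<kappa>i) \<oplus> \<epsilon> = (K \<oplus> \<epsilon>) \<oplus> \<kappa>i" by (auto simp: sdiff_def)
        have finKe: "finite (K \<oplus> \<epsilon>)" using finK finEps by (simp add: sdiff_def)
        have "syn Sig D ((K \<oplus> \<kappa>i) \<oplus> \<epsilon>) = syn Sig D (K \<oplus> \<epsilon>) \<oplus> syn Sig D \<kappa>i"
          unfolding eq1 by (rule syn_sdiff[OF finKe fin\<kappa>i])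
        also have "\<dots> = syn Sig D \<epsilon>' \<oplus> syn Sig D \<kappa>i" by (simp only: syn_eq)
        finally have A: "syn Sig D ((K \<oplus> \<kappa>i) \<oplus> \<epsilon>) = syn Sig D \<epsilon>' \<oplus> syn Sig D \<kappa>i" .
        have fe: "finite (\<epsilon>' \<oplus> \<delta>C)" using fine' fin\<delta>C by (simp add: sdiff_def)
        have "syn Sig D \<epsilon>'' = syn Sig D (\<epsilon>' \<oplus> \<delta>C) \<oplus> syn Sig D \<kappa>i"
          unfolding \<epsilon>''_def by (rule syn_sdiff[OF fe fin\<kappa>i])
        also have "syn Sig D (\<epsilon>' \<oplus> \<delta>C) = syn Sig D \<epsilon>'"
          unfolding syn_sdiff[OF fine' fin\<delta>C] \<delta>Csyn by simp
        finally have B: "syn Sig D \<epsilon>'' = syn Sig D \<epsilon>' \<oplus> syn Sig D \<kappa>i" .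
        show ?thesis using A B by simp
      qed
      have "card (K \<oplus> \<kappa>i) + card \<epsilon>'' \<le> card \<epsilon>" using c1 c2 c3 c4 card_le by linarith
      then show ?case using run' e''sub Ksub' syn''
        by (intro exI[of _ "K \<oplus> \<kappa>i"] exI[of _ \<epsilon>'']) (simp add: \<kappa>i_def)
    qed
    obtain K \<epsilon>' where run: "run E Sig D C B dec \<epsilon> n = Some K"
      and K_sub: "K \<subseteq> past C (Suc n)" and e'_sub: "\<epsilon>' \<subseteq> E - past C (Suc n)"
      and syn_eq: "syn Sig D (K \<oplus> \<epsilon>) = syn Sig D \<epsilon>'" and card_le: "card K + card \<epsilon>' \<le> card \<epsilon>"
      using inv[of n] by auto
    have "\<epsilon>' = {}" using e'_sub pastn by blast
    have KE: "K \<subseteq> E" using K_sub pastn by blast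
    have finK: "finite K" using KE by (rule finsub)
    have "syn Sig D K \<oplus> syn Sig D \<epsilon> = syn Sig D (K \<oplus> \<epsilon>)"
      by (rule syn_sdiff[OF finK finEps, symmetric])
    also have "\<dots> = {}" using syn_eq \<open>\<epsilon>' = {}\<close> syn_empty by simp
    finally have "syn Sig D K \<oplus> syn Sig D \<epsilon> = {}" .
    then have "syn Sig D K = syn Sig D \<epsilon>" by (simp add: sdiff_empty_iff)
    then show ?thesis using run KE card_le by auto
  qed
  show ?thesis
  proof (intro allI impI)
    fix \<epsilon> assume a: "\<epsilon> \<subseteq> E \<and> enat (2 * card \<epsilon>) < d"
    then have finEps: "finite \<epsilon>" using finsub by blast
    obtain \<kappa> where run: "run E Sig D C B dec \<epsilon> n = Some \<kappa>" and KE: "\<kappa> \<subseteq> E"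
      and syn\<kappa>: "syn Sig D \<kappa> = syn Sig D \<epsilon>" and card\<kappa>: "card \<kappa> \<le> card \<epsilon>"
      using core a by blast
    have fin\<kappa>: "finite \<kappa>" using KE by (rule finsub)
    have min: "card \<kappa> \<le> card \<kappa>'" if k': "\<kappa>' \<subseteq> E" "syn Sig D \<kappa>' = syn Sig D \<epsilon>" for \<kappa>'
    proof (cases "card \<epsilon> \<le> card \<kappa>'")
      case True then show ?thesis using card\<kappa> by simp
    next
      case False
      have fin': "finite \<kappa>'" using k'(1) by (rule finsub)
      have "enat (2 * card \<kappa>') \<le> enat (2 * card \<epsilon>)" using False by simp
      then have d': "enat (2 * card \<kappa>') < d" using a by (meson order.strict_trans1)
      have "run E Sig D C B dec \<kappa>' n = run E Sig D C B dec \<epsilon> n"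
        by (rule run_syn[OF fin' finEps k'(2)])
      then show ?thesis using core[OF k'(1) d'] run by auto
    qed
    have logic: "logical M L \<kappa> = logical M L \<epsilon>"
    proof -
      have s: "syn Sig D (\<kappa> \<oplus> \<epsilon>) = {}" unfolding syn_sdiff[OF fin\<kappa> finEps] syn\<kappa> by simp
      have sub: "\<kappa> \<oplus> \<epsilon> \<subseteq> E" using KE a by (simp add: sdiff_subset)
      have "card (\<kappa> \<oplus> \<epsilon>) \<le> 2 * card \<epsilon>" using card_sdiff_le[OF fin\<kappa> finEps] card\<kappa> by simp
      then have lt: "enat (card (\<kappa> \<oplus> \<epsilon>)) < d" using a by (meson enat_ord_simps(1) order.strict_trans1)
      have "logical M L (\<kappa> \<oplus> \<epsilon>) = {}"
      proof (rule ccontr)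
        assume "logical M L (\<kappa> \<oplus> \<epsilon>) \<noteq> {}"
        then have "enat (card (\<kappa> \<oplus> \<epsilon>)) \<in> {enat (card \<eta>) | \<eta>. \<eta> \<subseteq> E \<and> syn Sig D \<eta> = {} \<and> logical M L \<eta> \<noteq> {}}"
          using s sub by blast
        then have "d \<le> enat (card (\<kappa> \<oplus> \<epsilon>))" unfolding d_def fault_distance_def by (rule Inf_lower)
        then show False using lt by simp
      qed
      then show ?thesis unfolding logical_sdiff[OF fin\<kappa> finEps] sdiff_empty_iff .
    qed
    show "\<exists>\<kappa>. run E Sig D C B dec \<epsilon> n = Some \<kappa> \<and> syn Sig D \<kappa> = syn Sig D \<epsilon> \<and> card \<kappa> \<le> card \<epsilon>
           \<and> (\<forall>\<kappa>'. \<kappa>' \<subseteq> E \<and> syn Sig D \<kappa>' = syn Sig D \<epsilon> \<longrightarrow> card \<kappa> \<le> card \<kappa>')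
           \<and> logical M L \<kappa> = logical M L \<epsilon>"
      using run syn\<kappa> card\<kappa> min logic by blast
  qed
qed


end
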